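(* Suppose Assumptions (A1), (A2), (A3) hold, and either (SC) or (LIN) holds. Then for each $i\in\{1,\dots,k\}$ the Lagrange multiplier $x\mapsto\lambda_i(x)$ is continuous on $\mathcal{X}$, and there is a constant bounding $\lambda_i(x)$ for all $i$ and all $x\in\mathcal{X}$.
   Context: Let $f,g,h_1,\dots,h_k:\mathbb{R}^n\times\mathbb{R}^m\to\mathbb{R}$ and $\mathcal{X}\subseteq\mathbb{R}^n$. For $x\in\mathcal{X}$ let $\mathcal{Y}(x)=\{y: h_i(x,y)\le 0,\ i=1,\dots,k\}$ and $y^*(x)=\arg\min_{y\in\mathcal{Y}(x)} g(x,y)$. For $y\in y^*(x)$, $\lambda_i(x,y)\ge0$ denotes the optimal KKT multiplier of the $i$-th constraint, i.e. $\nabla_y g(x,y)+\sum_i\lambda_i(x,y)\nabla_y h_i(x,y)=0$ with complementary slackness. Under (SC), $y^*(x)$ is a singleton; under (LIN), $\lambda_i(x,y)$ does not depend on the choice of $y\in y^*(x)$; in both cases it is written $\lambda_i(x)$. Assumptions: (A1) $f$ once and $g,h_i$ twice continuously differentiable; (A2) $\mathcal{X}$ convex and compact and for every $x\in\mathcal{X}$ there is $y$ with $h_i(x,y)<0$ for all $i$; (A3) (LICQ) for every $x\in\mathcal{X}$ and $y\in y^*(x)$, $\{\nabla_y h_i(x,y): h_i(x,y)=0\}$ is linearly independent; (SC) for every $x\in\mathcal{X}$, $g(x,\cdot)$ is $\mu_g$-strongly convex and each $h_i(x,\cdot)$ convex; (LIN) for every $x\in\mathcal{X}$, $g(x,\cdot)$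 and all $h_i(x,\cdot)$ are linear (affine) in $y$ and $\mathcal{Y}(x)$ is compact. *)

theory Defs
  imports "HOL-Analysis.Analysis"
begin

definition C1_fun :: "('c::real_normed_vector \<Rightarrow> 'd::real_normed_vector) \<Rightarrow> bool" where
  "C1_fun F \<longleftrightarrow> (\<exists>F'. (\<forall>z. (F has_derivative blinfun_apply (F' z)) (at z)) \<and> continuous_on UNIV F')"

definition C2_fun :: "('c::real_normed_vector \<Rightarrow> 'd::real_normed_vector) \<Rightarrow> bool" where
  "C2_fun F \<longleftrightarrow> (\<exists>F'. (\<forall>z. (F has_derivative blinfun_apply (F' z)) (at z)) \<and> C1_fun F')"

definition strongly_convex_on :: "'b::real_normed_vector set \<Rightarrow> real \<Rightarrow> ('b \<Rightarrow> real) \<Rightarrow> bool" where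
  "strongly_convex_on S \<mu> f \<longleftrightarrow> convex_on S (\<lambda>y. f y - \<mu> / 2 * (norm y)\<^sup>2)"

definition affine_fun :: "('b::real_vector \<Rightarrow> real) \<Rightarrow> bool" where
  "affine_fun f \<longleftrightarrow> (\<exists>L c. linear L \<and> (\<forall>y. f y = L y + c))"

definition feas :: "nat \<Rightarrow> (nat \<Rightarrow> 'a \<Rightarrow> 'b \<Rightarrow> real) \<Rightarrow> 'a \<Rightarrow> 'b set" where
  "feas k h x = {y. \<forall>i\<in>{1..k}. h i x y \<le> 0}"

definition ystar :: "('a \<Rightarrow> 'b \<Rightarrow> real) \<Rightarrow> nat \<Rightarrow> (nat \<Rightarrow> 'a \<Rightarrow> 'b \<Rightarrow> real) \<Rightarrow> 'a \<Rightarrow> 'b set" where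
  "ystar g k h x = {y \<in> feas k h x. \<forall>y'\<in>feas k h x. g x y \<le> g x y'}"

definition Dy :: "('a \<Rightarrow> 'b::real_normed_vector \<Rightarrow> real) \<Rightarrow> 'a \<Rightarrow> 'b \<Rightarrow> 'b \<Rightarrow> real" where
  "Dy F x y = frechet_derivative (F x) (at y)"

definition is_KKT_mult :: "('a \<Rightarrow> 'b::real_normed_vector \<Rightarrow> real) \<Rightarrow> nat \<Rightarrow> (nat \<Rightarrow> 'a \<Rightarrow> 'b \<Rightarrow> real)
    \<Rightarrow> 'a \<Rightarrow> 'b \<Rightarrow> (nat \<Rightarrow> real) \<Rightarrow> bool" where
  "is_KKT_mult g k h x y lam \<longleftrightarrow>
     (\<forall>i\<in>{1..k}. lam i \<ge> 0) \<and>
     (\<forall>v. Dy g x y v + (\<Sum>i\<in>{1..k}. lam i * Dy (h i) x y v) = 0) \<and>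
     (\<forall>i\<in>{1..k}. lam i * h i x y = 0)"

definition LICQ_at :: "nat \<Rightarrow> (nat \<Rightarrow> 'a \<Rightarrow> 'b::real_normed_vector \<Rightarrow> real) \<Rightarrow> 'a \<Rightarrow> 'b \<Rightarrow> bool" where
  "LICQ_at k h x y \<longleftrightarrow>
     (\<forall>c. (\<forall>v. (\<Sum>i\<in>{i\<in>{1..k}. h i x y = 0}. c i * Dy (h i) x y v) = 0)
          \<longrightarrow> (\<forall>i\<in>{i\<in>{1..k}. h i x y = 0}. c i = 0))"

end

theory Submission
  imports Defs
begin
lemma tangent_ineq:
  fixes F :: "'b::real_normed_vector \<Rightarrow> real"
  assumes cv: "convex_on UNIV F" and der: "(F has_derivative F') (at y)"
  shows "F y + F' (z - y) \<le> F z"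
proof -
  define \<phi> where "\<phi> t = F (y + t *\<^sub>R (z - y))" for t::real
  have c\<phi>: "convex_on UNIV \<phi>"
  proof (rule convex_onI)
    fix t a b :: real assume "t>0" "t<1"
    have "y + ((1 - t) *\<^sub>R a + t *\<^sub>R b) *\<^sub>R (z - y) = (1-t) *\<^sub>R (y + a *\<^sub>R (z-y)) + t *\<^sub>R (y + b *\<^sub>R (z-y))"
      by (simp add: algebra_simps)
    then show "\<phi> ((1 - t) *\<^sub>R a + t *\<^sub>R b) \<le> (1 - t) * \<phi> a + t * \<phi> b"
      unfolding \<phi>_def using convex_onD[OF cv, of t] \<open>t>0\<close> \<open>t<1\<close> by auto
  qed simp
  have l: "bounded_linear F'" using der has_derivative_bounded_linear by blast
  have d1: "((\<lambda>t. y + t *\<^sub>R (z - y)) has_derivative (\<lambda>t. t *\<^sub>R (z-y))) (at 0)"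
    by (auto intro!: derivative_eq_intros)
  have der0: "(F has_derivative F') (at (y + 0 *\<^sub>R (z - y)))" using der by simp
  have "(\<phi> has_derivative (\<lambda>t. F' (t *\<^sub>R (z-y)))) (at 0)"
    unfolding \<phi>_def using diff_chain_at[OF d1 der0] by (simp add: o_def)
  moreover have "(\<lambda>t. F' (t *\<^sub>R (z-y))) = (*) (F' (z-y))"
    using l by (auto simp: fun_eq_iff linear_scale bounded_linear.linear linear_cmul)
  ultimately have "(\<phi> has_field_derivative F' (z-y)) (at 0)"
    by (simp add: has_field_derivative_def)
  then have "\<phi> 1 - \<phi> 0 \<ge> F' (z-y) * (1 - 0)"
    by (intro convex_on_imp_above_tangent[OF c\<phi>]) auto
  then show ?thesis unfolding \<phi>_def by simp
qed

lemma grad_repr: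
  fixes L :: "'b::euclidean_space \<Rightarrow> real"
  assumes "linear L"
  shows "L v = (\<Sum>b\<in>Basis. L b *\<^sub>R b) \<bullet> v"
proof -
  have "L v = L (\<Sum>b\<in>Basis. (v \<bullet> b) *\<^sub>R b)" by (simp add: euclidean_representation)
  also have "\<dots> = (\<Sum>b\<in>Basis. (v \<bullet> b) * L b)"
    using assms by (simp add: linear_sum linear_scale)
  also have "\<dots> = (\<Sum>b\<in>Basis. L b *\<^sub>R b) \<bullet> v"
    by (simp add: inner_sum_right inner_commute mult.commute)
  finally show ?thesis .
qed

lemma dir_deriv:
  fixes f :: "'b::real_normed_vector \<Rightarrow> real"
  assumes der: "(f has_derivative f') (at y0)"
  shows "((\<lambda>t. f (y0 + t *\<^sub>R d)) has_field_derivative f' d) (at 0)"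
proof -
  have l: "bounded_linear f'" using der has_derivative_bounded_linear by blast
  have d1: "((\<lambda>t. y0 + t *\<^sub>R d) has_derivative (\<lambda>t. t *\<^sub>R d)) (at 0)"
    by (auto intro!: derivative_eq_intros)
  have der0: "(f has_derivative f') (at (y0 + 0 *\<^sub>R d))" using der by simp
  have "((\<lambda>t. f (y0 + t *\<^sub>R d)) has_derivative (\<lambda>t. f' (t *\<^sub>R d))) (at 0)"
    using diff_chain_at[OF d1 der0] by (simp add: o_def)
  moreover have "(\<lambda>t. f' (t *\<^sub>R d)) = (*) (f' d)"
    using l by (auto simp: fun_eq_iff linear_scale bounded_linear.linear linear_cmul)
  ultimately show ?thesis by (simp add: has_field_derivative_def)
qed

lemma dir_dec:
  fixes f :: "'b::real_normed_vector \<Rightarrow> real"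
  assumes der: "(f has_derivative f') (at y0)" and neg: "f' d < 0"
  shows "eventually (\<lambda>t. f (y0 + t *\<^sub>R d) < f y0) (at_right 0)"
proof -
  obtain e where e: "e > 0" "\<forall>h>0. h < e \<longrightarrow> f (y0 + (0 + h) *\<^sub>R d) < f (y0 + 0 *\<^sub>R d)"
    using DERIV_neg_dec_right[OF dir_deriv[OF der, of d] neg] by blast
  show ?thesis unfolding eventually_at_right_field
    using e by (intro exI[of _ e]) auto
qed

lemma dir_cont:
  fixes f :: "'b::real_normed_vector \<Rightarrow> real"
  assumes der: "(f has_derivative f') (at y0)" and neg: "f y0 < 0"
  shows "eventually (\<lambda>t. f (y0 + t *\<^sub>R d) < 0) (at_right 0)"
proof -
  have "isCont (\<lambda>t. f (y0 + t *\<^sub>R d)) 0"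
    using dir_deriv[OF der, of d] by (rule DERIV_isCont)
  then have "((\<lambda>t. f (y0 + t *\<^sub>R d)) \<longlongrightarrow> f y0) (at 0)"
    by (simp add: isCont_def)
  then have "((\<lambda>t. f (y0 + t *\<^sub>R d)) \<longlongrightarrow> f y0) (at_right 0)"
    by (rule tendsto_mono[rotated]) (simp add: at_le)
  from order_tendstoD(2)[OF this neg] show ?thesis .
qed

lemma KKT_exists:
  fixes \<phi> :: "'b::euclidean_space \<Rightarrow> real" and \<psi> :: "nat \<Rightarrow> 'b \<Rightarrow> real"
  assumes d\<phi>: "(\<phi> has_derivative \<Phi>) (at y0)"
    and d\<psi>: "\<forall>i\<in>{1..k}. (\<psi> i has_derivative \<Psi> i) (at y0)"
    and fe: "\<forall>i\<in>{1..k}. \<psi> i y0 \<le> 0"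
    and opt: "\<forall>y. (\<forall>i\<in>{1..k}. \<psi> i y \<le> 0) \<longrightarrow> \<phi> y0 \<le> \<phi> y"
    and licq: "\<forall>c. (\<forall>v. (\<Sum>i\<in>{i\<in>{1..k}. \<psi> i y0 = 0}. c i * \<Psi> i v) = 0)
                 \<longrightarrow> (\<forall>i\<in>{i\<in>{1..k}. \<psi> i y0 = 0}. c i = 0)"
  shows "\<exists>lam. (\<forall>i\<in>{1..k}. lam i \<ge> 0) \<and> (\<forall>v. \<Phi> v + (\<Sum>i\<in>{1..k}. lam i * \<Psi> i v) = 0)
              \<and> (\<forall>i\<in>{1..k}. lam i * \<psi> i y0 = 0)"
proof -
  define A where "A = {i\<in>{1..k}. \<psi> i y0 = 0}"
  define I0 where "I0 = insert 0 A"
  have finA: "finite A" "finite I0" "0 \<notin> A" unfolding A_def I0_def by auto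
  define gr :: "('b \<Rightarrow> real) \<Rightarrow> 'b" where "gr L = (\<Sum>b\<in>Basis. L b *\<^sub>R b)" for L
  define vec where "vec i = (if i = 0 then gr \<Phi> else gr (\<Psi> i))" for i
  have linP: "linear \<Phi>" using d\<phi> has_derivative_linear by blast
  have linQ: "linear (\<Psi> i)" if "i \<in> {1..k}" for i using d\<psi> that has_derivative_linear by blast
  have vP: "\<Phi> v = vec 0 \<bullet> v" for v unfolding vec_def gr_def using grad_repr[OF linP, of v] by simp
  have vQ: "\<Psi> i v = vec i \<bullet> v" if "i \<in> A" for i v
  proof -
    have "i \<noteq> 0" "i \<in> {1..k}" using that by (auto simp: A_def)
    then show ?thesis unfolding vec_def gr_def using grad_repr[OF linQ[OF \<open>i \<in> {1..k}\<close>], of v] by simp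
  qed
  define T where "T = {z. \<exists>w. (\<forall>i\<in>I0. w i \<ge> 0) \<and> sum w I0 = 1 \<and> z = (\<Sum>i\<in>I0. w i *\<^sub>R vec i)}"
  show ?thesis
  proof (cases "0 \<in> convex hull (vec ` I0)")
    case True
    have "convex T" unfolding convex_def
    proof (intro allI impI ballI)
      fix x y and u v :: real assume x: "x \<in> T" and y: "y \<in> T" and uv: "0 \<le> u" "0 \<le> v" "u + v = 1"
      obtain w1 :: "nat \<Rightarrow> real" where w1: "\<forall>i\<in>I0. w1 i \<ge> 0" "sum w1 I0 = 1" "x = (\<Sum>i\<in>I0. w1 i *\<^sub>R vec i)"
        using x unfolding T_def by blast
      obtain w2 :: "nat \<Rightarrow> real" where w2: "\<forall>i\<in>I0. w2 i \<ge> 0" "sum w2 I0 = 1" "y = (\<Sum>i\<in>I0. w2 i *\<^sub>R vec i)"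
        using y unfolding T_def by blast
      have p1: "\<forall>i\<in>I0. u * w1 i + v * w2 i \<ge> 0" using w1 w2 uv by simp
      have p2: "(\<Sum>i\<in>I0. u * w1 i + v * w2 i) = 1"
        using w1 w2 uv by (simp add: sum.distrib sum_distrib_left[symmetric])
      have p3: "u *\<^sub>R x + v *\<^sub>R y = (\<Sum>i\<in>I0. (u * w1 i + v * w2 i) *\<^sub>R vec i)"
      proof -
        have "u *\<^sub>R x + v *\<^sub>R y = (\<Sum>i\<in>I0. (u * w1 i) *\<^sub>R vec i) + (\<Sum>i\<in>I0. (v * w2 i) *\<^sub>R vec i)"
          unfolding w1(3) w2(3) by (simp add: scaleR_sum_right)
        also have "\<dots> = (\<Sum>i\<in>I0. (u * w1 i) *\<^sub>R vec i + (v * w2 i) *\<^sub>R vec i)"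
          by (rule sum.distrib[symmetric])
        also have "\<dots> = (\<Sum>i\<in>I0. (u * w1 i + v * w2 i) *\<^sub>R vec i)"
          by (rule sum.cong) (simp_all add: scaleR_add_left)
        finally show ?thesis .
      qed
      show "u *\<^sub>R x + v *\<^sub>R y \<in> T" unfolding T_def mem_Collect_eq
        by (rule exI[of _ "\<lambda>i. u * w1 i + v * w2 i"]) (intro conjI p1 p2 p3)
    qed
    moreover have "vec ` I0 \<subseteq> T"
    proof
      fix z assume "z \<in> vec ` I0"
      then obtain j where j: "j \<in> I0" "z = vec j" by auto
      have "(\<Sum>i\<in>I0. (if i = j then 1 else 0) *\<^sub>R vec i) = (\<Sum>i\<in>I0. if i = j then vec i else 0)"
        by (rule sum.cong) auto
      also have "\<dots> = vec j" using j finA by simp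
      finally have e: "z = (\<Sum>i\<in>I0. (if i = j then 1 else 0) *\<^sub>R vec i)" using j by simp
      have "sum (\<lambda>i. if i = j then 1 else 0) I0 = (1::real)" using j finA by simp
      then show "z \<in> T" unfolding T_def using e by (intro CollectI exI[of _ "\<lambda>i. if i = j then 1 else 0"]) auto
    qed
    ultimately have "convex hull (vec ` I0) \<subseteq> T" by (rule hull_minimal[rotated])
    with True obtain w where w: "\<forall>i\<in>I0. w i \<ge> 0" "sum w I0 = 1" "(\<Sum>i\<in>I0. w i *\<^sub>R vec i) = 0"
      unfolding T_def by auto
    have split: "(\<Sum>i\<in>I0. w i *\<^sub>R vec i) = w 0 *\<^sub>R vec 0 + (\<Sum>i\<in>A. w i *\<^sub>R vec i)"
      unfolding I0_def using finA by simp
    have sw: "sum w I0 = w 0 + sum w A" unfolding I0_def using finA by simp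
    have lin: "w 0 * \<Phi> v + (\<Sum>i\<in>A. w i * \<Psi> i v) = 0" for v
    proof -
      have "0 = (\<Sum>i\<in>I0. w i *\<^sub>R vec i) \<bullet> v" using w by simp
      also have "\<dots> = w 0 * (vec 0 \<bullet> v) + (\<Sum>i\<in>A. w i * (vec i \<bullet> v))"
        unfolding split by (simp add: inner_add_left inner_sum_left)
      finally show ?thesis using vP vQ by simp
    qed
    have w0: "w 0 > 0"
    proof (rule ccontr)
      assume "\<not> w 0 > 0"
      then have "w 0 = 0" using w(1) unfolding I0_def by force
      then have "\<forall>v. (\<Sum>i\<in>A. w i * \<Psi> i v) = 0" using lin by simp
      then have "\<forall>i\<in>A. w i = 0" using licq unfolding A_def by blast
      then have "sum w A = 0" by simp
      with sw w(2) \<open>w 0 = 0\<close> show False by simp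
    qed
    define lam where "lam i = (if i \<in> A then w i / w 0 else 0)" for i
    have "(\<forall>i\<in>{1..k}. lam i \<ge> 0)"
      using w(1) w0 unfolding lam_def I0_def by auto
    moreover have "\<Phi> v + (\<Sum>i\<in>{1..k}. lam i * \<Psi> i v) = 0" for v
    proof -
      have Asub: "A \<subseteq> {1..k}" unfolding A_def by auto
      have "(\<Sum>i\<in>{1..k}. lam i * \<Psi> i v) = (\<Sum>i\<in>A. lam i * \<Psi> i v)"
        by (rule sum.mono_neutral_left[symmetric]) (use Asub in \<open>auto simp: lam_def\<close>)
      also have "\<dots> = (\<Sum>i\<in>A. w i * \<Psi> i v) / w 0"
        unfolding lam_def by (simp add: sum_divide_distrib)
      finally have "(\<Sum>i\<in>{1..k}. lam i * \<Psi> i v) = (\<Sum>i\<in>A. w i * \<Psi> i v) / w 0" .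
      moreover have "(\<Sum>i\<in>A. w i * \<Psi> i v) = - w 0 * \<Phi> v" using lin[of v] by linarith
      ultimately show ?thesis using w0 by simp
    qed
    moreover have "\<forall>i\<in>{1..k}. lam i * \<psi> i y0 = 0"
      unfolding lam_def A_def by auto
    ultimately show ?thesis by blast
  next
    case False
    have cmp: "compact (convex hull (vec ` I0))"
      using finA by (intro compact_convex_hull finite_imp_compact) auto
    obtain a b where ab: "a \<noteq> 0" "0 < b" "\<forall>x\<in>convex hull (vec ` I0). inner a x > b"
      using separating_hyperplane_closed_0[OF convex_convex_hull compact_imp_closed[OF cmp] False]
      by blast
    have neg: "vec i \<bullet> (- a) < 0" if "i \<in> I0" for i
    proof -
      have "vec i \<in> convex hull (vec ` I0)" using that by (intro hull_inc) auto
      with ab have "a \<bullet> vec i > b" by blast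
      with ab(2) show ?thesis by (simp add: inner_commute)
    qed
    define d where "d = - a"
    have ev0: "eventually (\<lambda>t. \<phi> (y0 + t *\<^sub>R d) < \<phi> y0) (at_right 0)"
      by (rule dir_dec[OF d\<phi>]) (use neg[of 0] vP in \<open>simp add: d_def I0_def\<close>)
    have evi: "eventually (\<lambda>t. \<psi> i (y0 + t *\<^sub>R d) < 0) (at_right 0)" if i: "i \<in> {1..k}" for i
    proof (cases "i \<in> A")
      case True
      then have "\<psi> i y0 = 0" unfolding A_def by auto
      moreover have "\<Psi> i d < 0" using neg[of i] vQ[OF True] True by (simp add: d_def I0_def)
      ultimately show ?thesis using dir_dec[OF d\<psi>[rule_format, OF i], of d] by simp
    next
      case False
      then have "\<psi> i y0 < 0" using fe i unfolding A_def by force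
      then show ?thesis using dir_cont[OF d\<psi>[rule_format, OF i]] by blast
    qed
    have "eventually (\<lambda>t. \<phi> (y0 + t *\<^sub>R d) < \<phi> y0 \<and> (\<forall>i\<in>{1..k}. \<psi> i (y0 + t *\<^sub>R d) < 0)) (at_right 0)"
      using ev0 evi by (intro eventually_conj) (auto simp: eventually_ball_finite_distrib)
    then obtain t where t: "\<phi> (y0 + t *\<^sub>R d) < \<phi> y0" "\<forall>i\<in>{1..k}. \<psi> i (y0 + t *\<^sub>R d) < 0"
      using eventually_happens'[OF trivial_limit_at_right_real] by blast
    with opt have False by (meson less_imp_le not_le)
    then show ?thesis ..
  qed
qed

lemma C2_D:
  assumes "C2_fun F"
  shows "\<exists>F'. (\<forall>z. (F has_derivative blinfun_apply (F' z)) (at z)) \<and> continuous_on UNIV F'"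
proof -
  obtain F' where d: "\<forall>z. (F has_derivative blinfun_apply (F' z)) (at z)" and c: "C1_fun F'"
    using assms unfolding C2_fun_def by blast
  from c obtain F'' where "\<forall>z. (F' has_derivative blinfun_apply (F'' z)) (at z)"
    unfolding C1_fun_def by blast
  then have "continuous_on UNIV F'"
    by (intro continuous_at_imp_continuous_on ballI has_derivative_continuous) blast
  with d show ?thesis by blast
qed

lemma part_deriv:
  fixes F :: "'a::real_normed_vector \<Rightarrow> 'b::real_normed_vector \<Rightarrow> real"
  assumes "\<forall>z. ((\<lambda>(x, y). F x y) has_derivative blinfun_apply (F' z)) (at z)"
  shows "(F x has_derivative (\<lambda>v. blinfun_apply (F' (x, y)) (0, v))) (at y)"
proof -
  have d1: "((\<lambda>v. (x, v)) has_derivative (\<lambda>v. (0, v))) (at y)"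
    by (auto intro!: derivative_eq_intros)
  show ?thesis using diff_chain_at[OF d1 assms[rule_format, of "(x, y)"]] by (simp add: o_def)
qed

lemma Dy_eq:
  fixes F :: "'a::real_normed_vector \<Rightarrow> 'b::real_normed_vector \<Rightarrow> real"
  assumes "\<forall>z. ((\<lambda>(x, y). F x y) has_derivative blinfun_apply (F' z)) (at z)"
  shows "Dy F x y = (\<lambda>v. blinfun_apply (F' (x, y)) (0, v))"
  unfolding Dy_def using frechet_derivative_at[OF part_deriv[OF assms]] by simp

lemma F_tendsto:
  fixes F :: "'a::real_normed_vector \<Rightarrow> 'b::real_normed_vector \<Rightarrow> real"
  assumes "\<forall>z. ((\<lambda>(x, y). F x y) has_derivative blinfun_apply (F' z)) (at z)"
    and "(a \<longlongrightarrow> a0) Fl" "(b \<longlongrightarrow> b0) Fl"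
  shows "((\<lambda>n. F (a n) (b n)) \<longlongrightarrow> F a0 b0) Fl"
proof -
  have "isCont (\<lambda>(x, y). F x y) (a0, b0)"
    using assms(1) has_derivative_continuous by blast
  from isCont_tendsto_compose[OF this tendsto_Pair[OF assms(2,3)]] show ?thesis by simp
qed

lemma Dy_tendsto:
  fixes F :: "'a::real_normed_vector \<Rightarrow> 'b::real_normed_vector \<Rightarrow> real"
  assumes "\<forall>z. ((\<lambda>(x, y). F x y) has_derivative blinfun_apply (F' z)) (at z)"
    and "continuous_on UNIV F'"
    and "(a \<longlongrightarrow> a0) Fl" "(b \<longlongrightarrow> b0) Fl" "(v \<longlongrightarrow> v0) Fl"
  shows "((\<lambda>n. Dy F (a n) (b n) (v n)) \<longlongrightarrow> Dy F a0 b0 v0) Fl"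
proof -
  have "isCont F' (a0, b0)" using assms(2) by (simp add: continuous_on_eq_continuous_at)
  from isCont_tendsto_compose[OF this tendsto_Pair[OF assms(3,4)]]
  have t1: "((\<lambda>n. F' (a n, b n)) \<longlongrightarrow> F' (a0, b0)) Fl" .
  have t2: "((\<lambda>n. (0::'a, v n)) \<longlongrightarrow> (0, v0)) Fl" by (intro tendsto_intros assms(5))
  show ?thesis unfolding Dy_eq[OF assms(1)] using blinfun.tendsto[OF t1 t2] .
qed

lemma Dy_bound:
  fixes F :: "'a::real_normed_vector \<Rightarrow> 'b::real_normed_vector \<Rightarrow> real"
  assumes "\<forall>z. ((\<lambda>(x, y). F x y) has_derivative blinfun_apply (F' z)) (at z)"
  shows "\<bar>Dy F x y v\<bar> \<le> norm (F' (x, y)) * norm v"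
proof -
  have "\<bar>Dy F x y v\<bar> = norm (blinfun_apply (F' (x, y)) (0, v))" unfolding Dy_eq[OF assms] by simp
  also have "\<dots> \<le> norm (F' (x, y)) * norm (0::'a, v)" by (rule norm_blinfun)
  also have "norm (0::'a, v) = norm v" by (simp add: norm_Pair)
  finally show ?thesis .
qed

lemma sc_lower:
  fixes \<phi> :: "'b::real_inner \<Rightarrow> real"
  assumes sc: "strongly_convex_on UNIV \<mu> \<phi>" and der: "(\<phi> has_derivative \<Phi>) (at y)"
  shows "\<phi> y + \<Phi> (z - y) + \<mu> / 2 * (norm (z - y))\<^sup>2 \<le> \<phi> z"
proof -
  define G where "G u = \<phi> u - \<mu> / 2 * (norm u)\<^sup>2" for u
  have cG: "convex_on UNIV G" using sc unfolding strongly_convex_on_def G_def by simp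
  have dn: "((\<lambda>u. (norm u)\<^sup>2) has_derivative (\<lambda>v. 2 * (y \<bullet> v))) (at y)"
  proof -
    have "((\<lambda>u. u \<bullet> u) has_derivative (\<lambda>v. y \<bullet> v + v \<bullet> y)) (at y)"
      by (auto intro!: derivative_eq_intros)
    then show ?thesis by (simp add: power2_norm_eq_inner inner_commute)
  qed
  have dG: "(G has_derivative (\<lambda>v. \<Phi> v - \<mu> / 2 * (2 * (y \<bullet> v)))) (at y)"
    unfolding G_def by (intro derivative_intros der dn)
  from tangent_ineq[OF cG dG, of z]
  have "G y + (\<Phi> (z - y) - \<mu> / 2 * (2 * (y \<bullet> (z - y)))) \<le> G z" .
  moreover have "(norm z)\<^sup>2 = (norm y)\<^sup>2 + 2 * (y \<bullet> (z - y)) + (norm (z - y))\<^sup>2"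
    by (simp add: power2_norm_eq_inner inner_diff inner_commute algebra_simps)
  ultimately show ?thesis unfolding G_def by (simp add: algebra_simps)
qed

lemma affine_deriv:
  fixes f :: "'b::euclidean_space \<Rightarrow> real"
  assumes "affine_fun f"
  obtains L c where "linear L" "\<And>y. f y = L y + c" "\<And>y. (f has_derivative L) (at y)"
proof -
  obtain L c where L: "linear L" "\<And>y. f y = L y + c" using assms unfolding affine_fun_def by blast
  have bl: "bounded_linear L" using L(1) by (simp add: linear_conv_bounded_linear)
  have "f = (\<lambda>y. L y + c)" using L(2) by auto
  then have "(f has_derivative L) (at y)" for y
    using bl by (auto intro!: derivative_eq_intros bounded_linear.has_derivative[where g = "\<lambda>x. x"])
  with L that show ?thesis by blast
qed

lemma affine_convex:
  fixes f :: "'b::euclidean_space \<Rightarrow> real"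
  assumes "affine_fun f"
  shows "convex_on UNIV f"
proof -
  obtain L c where L: "linear L" "\<And>y. f y = L y + c" using assms unfolding affine_fun_def by blast
  show ?thesis
  proof (rule convex_onI)
    fix t :: real and x y :: 'b
    show "f ((1 - t) *\<^sub>R x + t *\<^sub>R y) \<le> (1 - t) * f x + t * f y"
    proof -
      have e: "L ((1 - t) *\<^sub>R x + t *\<^sub>R y) = (1 - t) * L x + t * L y"
        using L(1) by (simp add: linear_add linear_scale)
      show ?thesis unfolding L(2) e by (simp add: algebra_simps)
    qed
  qed simp
qed

lemma subseq_conv:
  fixes a :: "nat \<Rightarrow> real"
  assumes "\<And>r :: nat \<Rightarrow> nat. strict_mono r \<Longrightarrow> \<exists>r' :: nat \<Rightarrow> nat. strict_mono r' \<and> (\<lambda>n. a (r (r' n))) \<longlonglongrightarrow> L"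
  shows "a \<longlonglongrightarrow> L"
proof (rule ccontr)
  assume "\<not> a \<longlonglongrightarrow> L"
  then obtain e where e: "e > 0" "\<not> eventually (\<lambda>n. dist (a n) L < e) sequentially"
    unfolding tendsto_iff by auto
  define S where "S = {n. dist (a n) L \<ge> e}"
  have "\<forall>N. \<exists>n\<ge>N. n \<in> S" using e(2) unfolding S_def eventually_sequentially by (auto simp: not_less)
  then have inf: "infinite S" using infinite_nat_iff_unbounded_le by blast
  define r where "r = enumerate S"
  have sm: "strict_mono r" unfolding strict_mono_def r_def using enumerate_mono inf by blast
  have inS: "r n \<in> S" for n unfolding r_def using enumerate_in_set inf by blast
  obtain r' where r': "strict_mono r'" "(\<lambda>n. a (r (r' n))) \<longlonglongrightarrow> L" using assms[OF sm] by blast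
  from tendstoD[OF r'(2) e(1)] obtain n where "dist (a (r (r' n))) L < e"
    using eventually_happens' sequentially_bot by blast
  moreover have "r (r' n) \<in> S" by (rule inS)
  ultimately show False unfolding S_def by simp
qed

lemma subseq_family:
  fixes a :: "nat \<Rightarrow> 'i \<Rightarrow> real"
  assumes "finite I" "\<forall>i\<in>I. bounded (range (\<lambda>n. a n i))"
  shows "\<exists>r l. strict_mono r \<and> (\<forall>i\<in>I. (\<lambda>n. a (r n) i) \<longlonglongrightarrow> l i)"
  using assms
proof (induction I rule: finite_induct)
  case empty
  show ?case using strict_mono_id by blast
next
  case (insert j I)
  obtain r l where r: "strict_mono r" "\<forall>i\<in>I. (\<lambda>n. a (r n) i) \<longlonglongrightarrow> l i" using insert by auto
  have "range (\<lambda>n. a (r n) j) \<subseteq> range (\<lambda>n. a n j)" by auto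
  then have "bounded (range (\<lambda>n. a (r n) j))" using insert.prems bounded_subset by auto
  then obtain lj r2 where r2: "strict_mono r2" "((\<lambda>n. a (r n) j) \<circ> r2) \<longlonglongrightarrow> lj"
    using bounded_imp_convergent_subsequence by blast
  have "(\<lambda>n. a (r (r2 n)) i) \<longlonglongrightarrow> (l(j := lj)) i" if "i \<in> insert j I" for i
  proof (cases "i = j")
    case True then show ?thesis using r2(2) by (simp add: o_def)
  next
    case False
    then have "i \<in> I" using that by auto
    from LIMSEQ_subseq_LIMSEQ[OF r(2)[rule_format, OF this] r2(1)] False show ?thesis by (simp add: o_def)
  qed
  moreover have "strict_mono (r \<circ> r2)" using r(1) r2(1) by (rule strict_mono_o)
  ultimately show ?case by (intro exI[of _ "r \<circ> r2"] exI[of _ "l(j := lj)"]) (simp add: o_def)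
qed

lemma affine_fd:
  fixes f :: "'b::euclidean_space \<Rightarrow> real"
  assumes "affine_fun f"
  shows "frechet_derivative f (at y) v = f (z + v) - f z"
proof -
  obtain L c where L: "linear L" "\<And>y. f y = L y + c" "\<And>y. (f has_derivative L) (at y)"
    using affine_deriv[OF assms] by blast
  have "frechet_derivative f (at y) = L" using frechet_derivative_at[OF L(3)] by simp
  then show ?thesis using L(1,2) by (simp add: linear_add)
qed

locale bl =
  fixes g :: "'a::euclidean_space \<Rightarrow> 'b::euclidean_space \<Rightarrow> real" and h :: "nat \<Rightarrow> 'a \<Rightarrow> 'b \<Rightarrow> real"
    and k :: nat and X :: "'a set"
    and G' :: "'a \<times> 'b \<Rightarrow> ('a \<times> 'b) \<Rightarrow>\<^sub>L real" and H' :: "nat \<Rightarrow> 'a \<times> 'b \<Rightarrow> ('a \<times> 'b) \<Rightarrow>\<^sub>L real"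
  assumes gd: "\<forall>z. ((\<lambda>(x, y). g x y) has_derivative blinfun_apply (G' z)) (at z)"
    and gc: "continuous_on UNIV G'"
    and hd: "\<And>i. i \<in> {1..k} \<Longrightarrow> \<forall>z. ((\<lambda>(x, y). h i x y) has_derivative blinfun_apply (H' i z)) (at z)"
    and hc: "\<And>i. i \<in> {1..k} \<Longrightarrow> continuous_on UNIV (H' i)"
    and cX: "compact X"
    and sl: "\<forall>x\<in>X. \<exists>y. \<forall>i\<in>{1..k}. h i x y < 0"
    and lq: "\<forall>x\<in>X. \<forall>y\<in>ystar g k h x. LICQ_at k h x y"
    and SL: "(\<exists>\<mu>>0. \<forall>x\<in>X. strongly_convex_on UNIV \<mu> (g x) \<and> (\<forall>i\<in>{1..k}. convex_on UNIV (h i x)))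
       \<or> (\<forall>x\<in>X. affine_fun (g x) \<and> (\<forall>i\<in>{1..k}. affine_fun (h i x)) \<and> compact (feas k h x))"
begin

lemma hconv: "x \<in> X \<Longrightarrow> i \<in> {1..k} \<Longrightarrow> convex_on UNIV (h i x)"
  using SL affine_convex by blast

lemma gdy: "(g x has_derivative Dy g x y) (at y)"
  unfolding Dy_eq[OF gd] by (rule part_deriv[OF gd])

lemma hdy: "i \<in> {1..k} \<Longrightarrow> (h i x has_derivative Dy (h i) x y) (at y)"
  unfolding Dy_eq[OF hd] by (rule part_deriv[OF hd])

lemma gcy: "continuous_on S (g x)"
  using gdy by (meson continuous_at_imp_continuous_on has_derivative_continuous)

lemma hcy: "i \<in> {1..k} \<Longrightarrow> continuous_on S (h i x)"
  using hdy by (meson continuous_at_imp_continuous_on has_derivative_continuous)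

lemma feas_closed: "closed (feas k h x)"
proof -
  have "feas k h x = (\<Inter>i\<in>{1..k}. {y. h i x y \<le> 0})" by (auto simp: feas_def)
  moreover have "closed {y. h i x y \<le> 0}" if "i \<in> {1..k}" for i
    using hcy[OF that] by (intro closed_Collect_le continuous_on_const) auto
  ultimately show ?thesis by auto
qed

lemma ystar_ne:
  assumes x: "x \<in> X"
  shows "\<exists>y. y \<in> ystar g k h x"
proof -
  obtain yh where yh: "\<forall>i\<in>{1..k}. h i x yh < 0" using sl x by blast
  have yhf: "yh \<in> feas k h x" using yh by (auto simp: feas_def less_imp_le)
  show ?thesis
  proof (cases "\<exists>\<mu>>0. \<forall>x\<in>X. strongly_convex_on UNIV \<mu> (g x) \<and> (\<forall>i\<in>{1..k}. convex_on UNIV (h i x))")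
    case True
    then obtain \<mu> where mu: "\<mu> > 0" "strongly_convex_on UNIV \<mu> (g x)" using x by blast
    define M where "M = norm (G' (x, yh))"
    define R where "R = 2 * M / \<mu>"
    have low: "g x yh + Dy g x yh (z - yh) + \<mu> / 2 * (norm (z - yh))\<^sup>2 \<le> g x z" for z
      by (rule sc_lower[OF mu(2) gdy])
    have bd: "\<bar>Dy g x yh v\<bar> \<le> M * norm v" for v unfolding M_def by (rule Dy_bound[OF gd])
    define K where "K = feas k h x \<inter> cball yh R"
    have "compact K" unfolding K_def by (intro closed_Int_compact feas_closed compact_cball)
    moreover have "K \<noteq> {}" using yhf unfolding K_def R_def M_def using mu(1) by auto
    moreover have "continuous_on K (g x)" by (rule gcy)
    ultimately obtain y0 where y0: "y0 \<in> K" "\<forall>y\<in>K. g x y0 \<le> g x y"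
      using continuous_attains_inf by blast
    have "g x y0 \<le> g x y" if y: "y \<in> feas k h x" for y
    proof (cases "y \<in> cball yh R")
      case True then show ?thesis using y y0 unfolding K_def by auto
    next
      case False
      define d where "d = norm (y - yh)"
      have dR: "d > R" using False unfolding d_def by (simp add: dist_norm norm_minus_commute)
      have M0: "M \<ge> 0" unfolding M_def by simp
      have "\<mu> * d > 2 * M" using dR mu(1) unfolding R_def by (simp add: field_simps)
      have R0: "R \<ge> 0" unfolding R_def using M0 mu(1) by simp
      have d0: "d > 0" using dR R0 by linarith
      have "\<mu> * d * d > 2 * M * d" using \<open>\<mu> * d > 2 * M\<close> d0 by (rule mult_strict_right_mono)
      then have q: "\<mu> / 2 * d\<^sup>2 > M * d" by (simp add: power2_eq_square field_simps)
      have "Dy g x yh (y - yh) \<ge> - (M * d)" using bd[of "y - yh"] unfolding d_def by linarith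
      then have "g x yh < g x y" using low[of y] q unfolding d_def by linarith
      moreover have "g x y0 \<le> g x yh" using y0 yhf mu(1) unfolding K_def R_def M_def by auto
      ultimately show ?thesis by linarith
    qed
    then show ?thesis using y0 unfolding ystar_def K_def by blast
  next
    case False
    then have "compact (feas k h x)" using SL x by blast
    moreover have "feas k h x \<noteq> {}" using yhf by auto
    moreover have "continuous_on (feas k h x) (g x)" by (rule gcy)
    ultimately obtain y0 where "y0 \<in> feas k h x" "\<forall>y\<in>feas k h x. g x y0 \<le> g x y"
      using continuous_attains_inf by blast
    then show ?thesis unfolding ystar_def by blast
  qed
qed

lemma sc_unique:
  assumes mu: "\<mu> > 0" "strongly_convex_on UNIV \<mu> (g x)" and x: "x \<in> X"
    and y1: "y1 \<in> ystar g k h x" and y2: "y2 \<in> ystar g k h x"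
  shows "y1 = y2"
proof -
  define m where "m = (1 - 1/2) *\<^sub>R y1 + (1/2::real) *\<^sub>R y2"
  have f1: "\<forall>i\<in>{1..k}. h i x y1 \<le> 0" and f2: "\<forall>i\<in>{1..k}. h i x y2 \<le> 0"
    using y1 y2 by (auto simp: ystar_def feas_def)
  have "h i x m \<le> 0" if i: "i \<in> {1..k}" for i
  proof -
    have "h i x m \<le> (1 - 1/2) * h i x y1 + (1/2) * h i x y2"
      unfolding m_def by (rule convex_onD[OF hconv[OF x i]]) auto
    with f1 f2 i show ?thesis by force
  qed
  then have mf: "m \<in> feas k h x" by (auto simp: feas_def)
  have o1: "g x y1 \<le> g x m" "g x y1 \<le> g x y2" using y1 mf y2 by (auto simp: ystar_def)
  have o2: "g x y2 \<le> g x y1" using y1 y2 by (auto simp: ystar_def)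
  have cv: "convex_on UNIV (\<lambda>y. g x y - \<mu> / 2 * (norm y)\<^sup>2)"
    using mu(2) unfolding strongly_convex_on_def .
  have "g x m - \<mu> / 2 * (norm m)\<^sup>2 \<le> (1 - 1/2) * (g x y1 - \<mu> / 2 * (norm y1)\<^sup>2) + (1/2) * (g x y2 - \<mu> / 2 * (norm y2)\<^sup>2)"
    unfolding m_def by (rule convex_onD[OF cv]) auto
  moreover have "(norm m)\<^sup>2 = (1/2) * (norm y1)\<^sup>2 + (1/2) * (norm y2)\<^sup>2 - (1/4) * (norm (y1 - y2))\<^sup>2"
    unfolding m_def by (simp add: power2_norm_eq_inner inner_add inner_diff inner_commute algebra_simps)
  ultimately have "g x m \<le> g x y1 - \<mu> / 8 * (norm (y1 - y2))\<^sup>2"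
    using o1 o2 by (simp add: algebra_simps)
  with o1 have "\<mu> / 8 * (norm (y1 - y2))\<^sup>2 \<le> 0" by linarith
  with mu(1) have "(norm (y1 - y2))\<^sup>2 \<le> 0" by (simp add: mult_le_0_iff)
  then show ?thesis by simp
qed

lemma lin_indep:
  assumes lin: "affine_fun (g x)" "\<forall>i\<in>{1..k}. affine_fun (h i x)"
    and y1: "y1 \<in> ystar g k h x" and y2: "y2 \<in> ystar g k h x"
    and kkt: "is_KKT_mult g k h x y1 lam"
  shows "is_KKT_mult g k h x y2 lam"
proof -
  have Dg: "Dy g x y v = g x (z + v) - g x z" for y z v
    unfolding Dy_def by (rule affine_fd[OF lin(1)])
  have Dh: "Dy (h i) x y v = h i x (z + v) - h i x z" if "i \<in> {1..k}" for i y z v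
    unfolding Dy_def using lin(2) that by (intro affine_fd) auto
  have Dg': "Dy g x y2 v = Dy g x y1 v" for v using Dg[where y=y2 and z=0 and v=v] Dg[where y=y1 and z=0 and v=v] by simp
  have Dh': "Dy (h i) x y2 v = Dy (h i) x y1 v" if "i \<in> {1..k}" for i v
    using Dh[OF that, where y=y2 and z=0 and v=v] Dh[OF that, where y=y1 and z=0 and v=v] by simp
  have nn: "\<forall>i\<in>{1..k}. lam i \<ge> 0" and st: "\<forall>v. Dy g x y1 v + (\<Sum>i\<in>{1..k}. lam i * Dy (h i) x y1 v) = 0"
    and cs: "\<forall>i\<in>{1..k}. lam i * h i x y1 = 0"
    using kkt unfolding is_KKT_mult_def by auto
  have st2: "Dy g x y2 v + (\<Sum>i\<in>{1..k}. lam i * Dy (h i) x y2 v) = 0" for v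
    using st Dg' Dh' by simp
  have geq: "g x y2 = g x y1" using y1 y2 by (force simp: ystar_def)
  have "0 = Dy g x y1 (y2 - y1) + (\<Sum>i\<in>{1..k}. lam i * Dy (h i) x y1 (y2 - y1))" using st by simp
  also have "Dy g x y1 (y2 - y1) = 0" using Dg[where y=y1 and z=y1 and v="y2 - y1"] geq by simp
  also have "(\<Sum>i\<in>{1..k}. lam i * Dy (h i) x y1 (y2 - y1)) = (\<Sum>i\<in>{1..k}. lam i * h i x y2 - lam i * h i x y1)"
  proof (rule sum.cong)
    fix i assume i: "i \<in> {1..k}"
    show "lam i * Dy (h i) x y1 (y2 - y1) = lam i * h i x y2 - lam i * h i x y1"
    proof -
      have "Dy (h i) x y1 (y2 - y1) = h i x y2 - h i x y1"
        using Dh[OF i, where y=y1 and z=y1 and v="y2 - y1"] by simp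
      then show ?thesis by (simp add: right_diff_distrib)
    qed
  qed simp
  also have "\<dots> = (\<Sum>i\<in>{1..k}. lam i * h i x y2)" by (rule sum.cong) (use cs in auto)
  finally have s0: "(\<Sum>i\<in>{1..k}. - (lam i * h i x y2)) = 0" by (simp add: sum_negf)
  have f2: "\<forall>i\<in>{1..k}. h i x y2 \<le> 0" using y2 by (auto simp: ystar_def feas_def)
  have nn2: "\<forall>i\<in>{1..k}. 0 \<le> - (lam i * h i x y2)" using nn f2 by (simp add: mult_nonneg_nonpos)
  have e: "((\<Sum>i\<in>{1..k}. - (lam i * h i x y2)) = 0) = (\<forall>i\<in>{1..k}. - (lam i * h i x y2) = 0)"
    by (rule sum_nonneg_eq_0_iff[OF finite_atLeastAtMost]) (use nn2 in blast)
  have z: "\<forall>i\<in>{1..k}. lam i * h i x y2 = 0" using e s0 by simp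
  show ?thesis unfolding is_KKT_mult_def
  proof (intro conjI)
    show "\<forall>i\<in>{1..k}. 0 \<le> lam i" by (rule nn)
    show "\<forall>v. Dy g x y2 v + (\<Sum>i\<in>{1..k}. lam i * Dy (h i) x y2 v) = 0" using st2 by blast
    show "\<forall>i\<in>{1..k}. lam i * h i x y2 = 0" by (rule z)
  qed
qed

lemma KKT_unique:
  assumes x: "x \<in> X" and y: "y \<in> ystar g k h x"
    and k1: "is_KKT_mult g k h x y l1" and k2: "is_KKT_mult g k h x y l2" and i: "i \<in> {1..k}"
  shows "l1 i = l2 i"
proof -
  define A where "A = {i\<in>{1..k}. h i x y = 0}"
  have f: "\<forall>i\<in>{1..k}. h i x y \<le> 0" using y by (auto simp: ystar_def feas_def)
  have z: "l1 j = 0 \<and> l2 j = 0" if "j \<in> {1..k}" "j \<notin> A" for j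
  proof -
    have "h j x y \<noteq> 0" using that unfolding A_def by auto
    then show ?thesis using k1 k2 that unfolding is_KKT_mult_def by auto
  qed
  have S: "(\<Sum>j\<in>A. (l1 j - l2 j) * Dy (h j) x y v) = 0" for v
  proof -
    have "(\<Sum>j\<in>A. (l1 j - l2 j) * Dy (h j) x y v) = (\<Sum>j\<in>{1..k}. (l1 j - l2 j) * Dy (h j) x y v)"
      by (rule sum.mono_neutral_left) (use z in \<open>auto simp: A_def\<close>)
    also have "\<dots> = (\<Sum>j\<in>{1..k}. l1 j * Dy (h j) x y v) - (\<Sum>j\<in>{1..k}. l2 j * Dy (h j) x y v)"
      by (simp add: left_diff_distrib sum_subtractf)
    also have "\<dots> = 0"
    proof -
      have "Dy g x y v + (\<Sum>j\<in>{1..k}. l1 j * Dy (h j) x y v) = 0"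
        using k1 unfolding is_KKT_mult_def by blast
      moreover have "Dy g x y v + (\<Sum>j\<in>{1..k}. l2 j * Dy (h j) x y v) = 0"
        using k2 unfolding is_KKT_mult_def by blast
      ultimately show ?thesis by linarith
    qed
    finally show ?thesis .
  qed
  have "LICQ_at k h x y" using lq x y by blast
  then have L: "\<forall>c. (\<forall>v. (\<Sum>i\<in>A. c i * Dy (h i) x y v) = 0) \<longrightarrow> (\<forall>i\<in>A. c i = 0)"
    unfolding LICQ_at_def A_def .
  have "(\<forall>v. (\<Sum>i\<in>A. (\<lambda>j. l1 j - l2 j) i * Dy (h i) x y v) = 0) \<longrightarrow> (\<forall>i\<in>A. (\<lambda>j. l1 j - l2 j) i = 0)"
    by (rule spec[OF L])
  then have "\<forall>j\<in>A. l1 j - l2 j = 0" using S by simp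
  then show ?thesis using z i by (cases "i \<in> A") auto
qed

lemma lam_exists: "\<exists>lam. \<forall>x\<in>X. \<forall>y\<in>ystar g k h x. is_KKT_mult g k h x y (lam x)"
proof -
  have "\<exists>l. \<forall>y\<in>ystar g k h x. is_KKT_mult g k h x y l" if x: "x \<in> X" for x
  proof -
    obtain y0 where y0: "y0 \<in> ystar g k h x" using ystar_ne[OF x] by blast
    have fe: "\<forall>i\<in>{1..k}. h i x y0 \<le> 0" using y0 by (auto simp: ystar_def feas_def)
    have opt: "\<forall>y. (\<forall>i\<in>{1..k}. h i x y \<le> 0) \<longrightarrow> g x y0 \<le> g x y"
      using y0 by (auto simp: ystar_def feas_def)
    have li: "\<forall>c. (\<forall>v. (\<Sum>i\<in>{i\<in>{1..k}. h i x y0 = 0}. c i * Dy (h i) x y0 v) = 0)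
                 \<longrightarrow> (\<forall>i\<in>{i\<in>{1..k}. h i x y0 = 0}. c i = 0)"
      using lq x y0 unfolding LICQ_at_def by blast
    obtain l where l: "\<forall>i\<in>{1..k}. l i \<ge> 0" "\<forall>v. Dy g x y0 v + (\<Sum>i\<in>{1..k}. l i * Dy (h i) x y0 v) = 0"
      "\<forall>i\<in>{1..k}. l i * h i x y0 = 0"
      using KKT_exists[of "g x" "Dy g x y0" y0 k "\<lambda>i. h i x" "\<lambda>i. Dy (h i) x y0", OF gdy _ fe opt li]
        hdy by blast
    then have k0: "is_KKT_mult g k h x y0 l" unfolding is_KKT_mult_def by blast
    show ?thesis
    proof (cases "\<exists>\<mu>>0. \<forall>x\<in>X. strongly_convex_on UNIV \<mu> (g x) \<and> (\<forall>i\<in>{1..k}. convex_on UNIV (h i x))")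
      case True
      then obtain \<mu> where mu: "\<mu> > 0" "strongly_convex_on UNIV \<mu> (g x)" using x by blast
      show ?thesis using sc_unique[OF mu x y0] k0 by blast
    next
      case False
      then have "affine_fun (g x)" "\<forall>i\<in>{1..k}. affine_fun (h i x)" using SL x by blast+
      then show ?thesis using lin_indep y0 k0 by blast
    qed
  qed
  then show ?thesis by metis
qed


lemma slater_ev:
  assumes "xs \<longlonglongrightarrow> x0" "\<forall>i\<in>{1..k}. h i x0 w < 0"
  shows "eventually (\<lambda>n. \<forall>i\<in>{1..k}. h i (xs n) w < 0) sequentially"
proof -
  have "eventually (\<lambda>n. h i (xs n) w < 0) sequentially" if i: "i \<in> {1..k}" for i
  proof -
    have "(\<lambda>n. h i (xs n) w) \<longlonglongrightarrow> h i x0 w"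
      by (rule F_tendsto[OF hd[OF i] assms(1) tendsto_const])
    from order_tendstoD(2)[OF this] assms(2) i show ?thesis by blast
  qed
  then show ?thesis by (simp add: eventually_ball_finite_distrib)
qed

lemma closed_ystar:
  assumes xs: "\<forall>n. xs n \<in> X" "xs \<longlonglongrightarrow> x0" "x0 \<in> X"
    and ys: "\<forall>n. ys n \<in> ystar g k h (xs n)" "ys \<longlonglongrightarrow> yb"
  shows "yb \<in> ystar g k h x0"
proof -
  have fb: "h i x0 yb \<le> 0" if i: "i \<in> {1..k}" for i
  proof -
    have "(\<lambda>n. h i (xs n) (ys n)) \<longlonglongrightarrow> h i x0 yb"
      by (rule F_tendsto[OF hd[OF i] xs(2) ys(2)])
    moreover have "\<forall>n. h i (xs n) (ys n) \<le> 0" using ys(1) i by (auto simp: ystar_def feas_def)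
    ultimately show ?thesis by (intro tendsto_upperbound) auto
  qed
  then have ybf: "yb \<in> feas k h x0" by (auto simp: feas_def)
  obtain yh where yh: "\<forall>i\<in>{1..k}. h i x0 yh < 0" using sl xs(3) by blast
  have "g x0 yb \<le> g x0 y'" if y': "y' \<in> feas k h x0" for y'
  proof -
    define w where "w t = (1 - t) *\<^sub>R y' + t *\<^sub>R yh" for t :: real
    have wle: "g x0 yb \<le> g x0 (w t)" if t: "0 < t" "t < 1" for t
    proof -
      have "h i x0 (w t) < 0" if i: "i \<in> {1..k}" for i
      proof -
        have "h i x0 (w t) \<le> (1 - t) * h i x0 y' + t * h i x0 yh"
          unfolding w_def by (rule convex_onD[OF hconv[OF xs(3) i]]) (use t in auto)
        moreover have "(1 - t) * h i x0 y' \<le> 0" using y' i t by (auto simp: feas_def mult_nonneg_nonpos)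
        moreover have "t * h i x0 yh < 0" using yh i t by (simp add: mult_pos_neg)
        ultimately show ?thesis by linarith
      qed
      then have "\<forall>i\<in>{1..k}. h i x0 (w t) < 0" by blast
      from slater_ev[OF xs(2) this]
      have ev: "eventually (\<lambda>n. \<forall>i\<in>{1..k}. h i (xs n) (w t) < 0) sequentially" .
      have ev2: "eventually (\<lambda>n. g (xs n) (ys n) \<le> g (xs n) (w t)) sequentially"
      proof (rule eventually_mono[OF ev])
        fix n assume "\<forall>i\<in>{1..k}. h i (xs n) (w t) < 0"
        then have "w t \<in> feas k h (xs n)" by (auto simp: feas_def less_imp_le)
        then show "g (xs n) (ys n) \<le> g (xs n) (w t)" using ys(1) by (auto simp: ystar_def)
      qed
      show ?thesis
        by (rule tendsto_le[OF _ F_tendsto[OF gd xs(2) tendsto_const] F_tendsto[OF gd xs(2) ys(2)] ev2]) simp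
    qed
    have wt: "((\<lambda>t. g x0 (w t)) \<longlongrightarrow> g x0 y') (at_right 0)"
    proof -
      have "(w \<longlongrightarrow> (1 - 0) *\<^sub>R y' + 0 *\<^sub>R yh) (at_right 0)"
        unfolding w_def by (intro tendsto_intros)
      then have "(w \<longlongrightarrow> y') (at_right 0)" by simp
      from F_tendsto[OF gd tendsto_const this] show ?thesis .
    qed
    have "eventually (\<lambda>t. g x0 yb \<le> g x0 (w t)) (at_right (0::real))"
    proof -
      have "eventually (\<lambda>t. t \<in> {0<..<1}) (at_right (0::real))" by (rule eventually_at_right_real) simp
      then show ?thesis by (rule eventually_mono) (use wle in auto)
    qed
    then show ?thesis by (rule tendsto_lowerbound[OF wt]) simp
  qed
  with ybf show ?thesis by (auto simp: ystar_def)
qed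


lemma Dy_scale: "i \<in> {1..k} \<Longrightarrow> Dy (h i) x y (c *\<^sub>R v) = c * Dy (h i) x y v"
proof -
  assume i: "i \<in> {1..k}"
  have e: "(0::'a, c *\<^sub>R v) = c *\<^sub>R (0, v)" by simp
  show ?thesis unfolding Dy_eq[OF hd[OF i]] e blinfun.scaleR_right by simp
qed

lemma seqY:
  assumes xs: "\<forall>n. xs n \<in> X" "xs \<longlonglongrightarrow> x0" "x0 \<in> X"
    and ys: "\<forall>n. ys n \<in> ystar g k h (xs n)"
  shows "\<exists>r yb. strict_mono r \<and> (\<lambda>n. ys (r n)) \<longlonglongrightarrow> yb"
proof -
  obtain yh where yh: "\<forall>i\<in>{1..k}. h i x0 yh < 0" using sl xs(3) by blast
  have evyh: "eventually (\<lambda>n. \<forall>i\<in>{1..k}. h i (xs n) yh < 0) sequentially"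
    by (rule slater_ev[OF xs(2) yh])
  define s where "s n = 1 / (1 + norm (ys n))" for n
  define z where "z n = s n *\<^sub>R ys n" for n
  have s_pos: "s n > 0" "s n \<le> 1" for n
  proof -
    have p: "0 < 1 + norm (ys n)" using norm_ge_zero[of "ys n"] by linarith
    have a: "1 \<le> 1 + norm (ys n)" using norm_ge_zero[of "ys n"] by linarith
    show "s n > 0" unfolding s_def by (rule divide_pos_pos[OF zero_less_one p])
    have "1 / (1 + norm (ys n)) \<le> 1 / 1" by (intro divide_left_mono a zero_le_one mult_pos_pos p zero_less_one)
    then show "s n \<le> 1" unfolding s_def by simp
  qed
  have nz: "norm (z n) = 1 - s n" for n
  proof -
    have "norm (z n) = norm (ys n) / (1 + norm (ys n))" unfolding z_def s_def by simp
    also have "\<dots> = 1 - s n"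
    proof -
      have p: "1 + norm (ys n) \<noteq> 0" using norm_ge_zero[of "ys n"] by linarith
      have q: "(1 + norm (ys n)) / (1 + norm (ys n)) = 1" using p by (rule divide_self)
      show ?thesis unfolding s_def by (metis q diff_divide_distrib add_diff_cancel_left')
    qed
    finally show ?thesis .
  qed
  have "bounded (range z)" unfolding bounded_iff using nz s_pos by (intro exI[of _ 1]) (auto simp: less_imp_le)
  then obtain r0 zb where r0: "strict_mono r0" "(z \<circ> r0) \<longlonglongrightarrow> zb"
    using bounded_imp_convergent_subsequence by blast
  have "norm (s (r0 n)) \<le> 1" for n using s_pos[of "r0 n"] by simp
  then have "bounded (range (\<lambda>n. s (r0 n)))" unfolding bounded_iff by auto
  then obtain r1 sb where r1: "strict_mono r1" "((\<lambda>n. s (r0 n)) \<circ> r1) \<longlonglongrightarrow> sb"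
    using bounded_imp_convergent_subsequence by blast
  define q where "q = r0 \<circ> r1"
  have q: "strict_mono q" unfolding q_def using r0(1) r1(1) by (rule strict_mono_o)
  have sq: "(\<lambda>n. s (q n)) \<longlonglongrightarrow> sb" using r1(2) by (simp add: q_def o_def)
  have zq: "(\<lambda>n. z (q n)) \<longlonglongrightarrow> zb" using LIMSEQ_subseq_LIMSEQ[OF r0(2) r1(1)] by (simp add: q_def o_def)
  have s0: "0 \<le> s n" for n using s_pos(1)[of n] by (rule less_imp_le)
  have sb0: "sb \<ge> 0" by (intro tendsto_lowerbound[OF sq] always_eventually allI s0) simp
  have "sb > 0"
  proof (cases "\<exists>\<mu>>0. \<forall>x\<in>X. strongly_convex_on UNIV \<mu> (g x) \<and> (\<forall>i\<in>{1..k}. convex_on UNIV (h i x))")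
    case True
    then obtain \<mu> where mu: "\<mu> > 0" "\<forall>x\<in>X. strongly_convex_on UNIV \<mu> (g x)" by blast
    have "isCont G' (x0, yh)" using gc by (simp add: continuous_on_eq_continuous_at)
    from isCont_tendsto_compose[OF this tendsto_Pair[OF xs(2) tendsto_const]]
    have "(\<lambda>n. G' (xs n, yh)) \<longlonglongrightarrow> G' (x0, yh)" .
    then have "Bseq (\<lambda>n. G' (xs n, yh))" by (intro convergent_imp_Bseq convergentI)
    then obtain Mb where Mb: "Mb > 0" "\<forall>n. norm (G' (xs n, yh)) \<le> Mb" by (rule BseqE) blast
    define B where "B = norm yh + 2 * Mb / \<mu>"
    have B0: "B \<ge> 0" unfolding B_def using Mb mu by simp
    have evB: "eventually (\<lambda>n. norm (ys n) \<le> B) sequentially"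
    proof (rule eventually_mono[OF evyh])
      fix n assume hn: "\<forall>i\<in>{1..k}. h i (xs n) yh < 0"
      then have "yh \<in> feas k h (xs n)" by (auto simp: feas_def less_imp_le)
      then have opt: "g (xs n) (ys n) \<le> g (xs n) yh" using ys by (auto simp: ystar_def)
      define d where "d = norm (ys n - yh)"
      have low: "g (xs n) yh + Dy g (xs n) yh (ys n - yh) + \<mu> / 2 * d\<^sup>2 \<le> g (xs n) (ys n)"
        unfolding d_def using mu xs(1) by (intro sc_lower gdy) blast
      have "\<bar>Dy g (xs n) yh (ys n - yh)\<bar> \<le> norm (G' (xs n, yh)) * d"
        unfolding d_def by (rule Dy_bound[OF gd])
      also have "\<dots> \<le> Mb * d" using Mb unfolding d_def by (intro mult_right_mono) auto
      finally have "\<mu> / 2 * d * d \<le> Mb * d" using low opt by (simp add: power2_eq_square)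
      have "d \<le> 2 * Mb / \<mu>"
      proof (cases "d = 0")
        case True then show ?thesis using Mb mu by simp
      next
        case False
        then have "d > 0" unfolding d_def by simp
        with \<open>\<mu> / 2 * d * d \<le> Mb * d\<close> have "\<mu> / 2 * d \<le> Mb" by simp
        then show ?thesis using mu by (simp add: field_simps)
      qed
      moreover have "norm (ys n) \<le> norm yh + d" unfolding d_def by (metis norm_triangle_sub add.commute)
      ultimately show "norm (ys n) \<le> B" unfolding B_def by linarith
    qed
    have "eventually (\<lambda>n. 1 / (1 + B) \<le> s n) sequentially"
    proof (rule eventually_mono[OF evB])
      fix n assume "norm (ys n) \<le> B"
      moreover have p: "0 < 1 + norm (ys n)" using norm_ge_zero[of "ys n"] by linarith
      ultimately show "1 / (1 + B) \<le> s n" unfolding s_def using B0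
        by (intro divide_left_mono mult_pos_pos p) auto
    qed
    then have "eventually (\<lambda>n. 1 / (1 + B) \<le> s (q n)) sequentially" by (rule eventually_subseq[OF q])
    then have "1 / (1 + B) \<le> sb" by (rule tendsto_lowerbound[OF sq]) simp
    moreover have "1 / (1 + B) > 0" using B0 by simp
    ultimately show ?thesis by linarith
  next
    case False
    then have lin: "\<forall>x\<in>X. affine_fun (g x) \<and> (\<forall>i\<in>{1..k}. affine_fun (h i x)) \<and> compact (feas k h x)"
      using SL by blast
    show ?thesis
    proof (rule ccontr)
      assume "\<not> sb > 0"
      with sb0 have sb: "sb = 0" by simp
      have "(\<lambda>n. norm (z (q n))) \<longlonglongrightarrow> norm zb" by (rule tendsto_norm[OF zq])
      moreover have "(\<lambda>n. norm (z (q n))) \<longlonglongrightarrow> 1 - sb" unfolding nz by (intro tendsto_intros sq)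
      ultimately have nzb: "norm zb = 1" using sb LIMSEQ_unique by fastforce
      have Dle: "Dy (h i) x0 0 zb \<le> 0" if i: "i \<in> {1..k}" for i
      proof -
        have le: "s n * h i (xs n) 0 + Dy (h i) (xs n) 0 (z n) \<le> 0" for n
        proof -
          have aff: "affine_fun (h i (xs n))" using lin xs(1) i by blast
          have "Dy (h i) (xs n) 0 (ys n) = h i (xs n) (0 + ys n) - h i (xs n) 0"
            unfolding Dy_def by (rule affine_fd[OF aff])
          moreover have "Dy (h i) (xs n) 0 (z n) = s n * Dy (h i) (xs n) 0 (ys n)"
            unfolding z_def by (rule Dy_scale[OF i])
          ultimately have e: "s n * h i (xs n) 0 + Dy (h i) (xs n) 0 (z n) = s n * h i (xs n) (ys n)"
            by (simp add: distrib_left[symmetric])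
          have "h i (xs n) (ys n) \<le> 0" using ys i by (auto simp: ystar_def feas_def)
          then show ?thesis unfolding e by (intro mult_nonneg_nonpos s0)
        qed
        have "(\<lambda>n. s (q n) * h i (xs (q n)) 0 + Dy (h i) (xs (q n)) 0 (z (q n)))
              \<longlonglongrightarrow> sb * h i x0 0 + Dy (h i) x0 0 zb"
        proof (intro tendsto_intros sq)
          have xq: "(\<lambda>n. xs (q n)) \<longlonglongrightarrow> x0" using LIMSEQ_subseq_LIMSEQ[OF xs(2) q] by (simp add: o_def)
          show "(\<lambda>n. h i (xs (q n)) 0) \<longlonglongrightarrow> h i x0 0" by (rule F_tendsto[OF hd[OF i] xq tendsto_const])
          show "(\<lambda>n. Dy (h i) (xs (q n)) 0 (z (q n))) \<longlonglongrightarrow> Dy (h i) x0 0 zb"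
            by (rule Dy_tendsto[OF hd[OF i] hc[OF i] xq tendsto_const zq])
        qed
        then have "sb * h i x0 0 + Dy (h i) x0 0 zb \<le> 0" by (rule tendsto_upperbound) (use le in auto)
        then show ?thesis using sb by simp
      qed
      have "compact (feas k h x0)" using lin xs(3) by blast
      then obtain B where B: "\<forall>y\<in>feas k h x0. norm y \<le> B" using compact_imp_bounded bounded_iff by metis
      define t where "t = B + norm yh + 1"
      have yhf: "yh \<in> feas k h x0" using yh by (auto simp: feas_def less_imp_le)
      then have "norm yh \<le> B" using B by blast
      then have t0: "t > 0" unfolding t_def using norm_ge_zero[of yh] by linarith
      have "h i x0 (yh + t *\<^sub>R zb) < 0" if i: "i \<in> {1..k}" for i
      proof -
        have aff: "affine_fun (h i x0)" using lin xs(3) i by blast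
        have "Dy (h i) x0 0 (t *\<^sub>R zb) = h i x0 (yh + t *\<^sub>R zb) - h i x0 yh"
          unfolding Dy_def by (rule affine_fd[OF aff])
        moreover have "Dy (h i) x0 0 (t *\<^sub>R zb) = t * Dy (h i) x0 0 zb" by (rule Dy_scale[OF i])
        moreover have "t * Dy (h i) x0 0 zb \<le> 0" using Dle[OF i] t0 by (simp add: mult_nonneg_nonpos)
        ultimately show ?thesis using yh i by force
      qed
      then have "yh + t *\<^sub>R zb \<in> feas k h x0" by (auto simp: feas_def less_imp_le)
      then have n1: "norm (yh + t *\<^sub>R zb) \<le> B" using B by blast
      have "norm (t *\<^sub>R zb) \<le> norm (yh + t *\<^sub>R zb) + norm yh"
        by (metis add_diff_cancel_left' norm_triangle_ineq4 add.commute)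
      moreover have "norm (t *\<^sub>R zb) = t" using nzb t0 by simp
      ultimately show False using n1 unfolding t_def by linarith
    qed
  qed
  have "(\<lambda>n. (1 / s (q n)) *\<^sub>R z (q n)) \<longlonglongrightarrow> (1 / sb) *\<^sub>R zb"
    using \<open>sb > 0\<close> by (intro tendsto_intros sq zq) simp
  moreover have "(1 / s (q n)) *\<^sub>R z (q n) = ys (q n)" for n
    unfolding z_def using s_pos[of "q n"] by simp
  ultimately show ?thesis using q by auto
qed


lemma lam_lim:
  assumes lam: "\<forall>x\<in>X. \<forall>y\<in>ystar g k h x. is_KKT_mult g k h x y (lam x)"
    and xs: "\<forall>n. xs n \<in> X" "xs \<longlonglongrightarrow> x0" "x0 \<in> X"
    and ys: "\<forall>n. ys n \<in> ystar g k h (xs n)" "ys \<longlonglongrightarrow> yb" and yb: "yb \<in> ystar g k h x0"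
  shows "\<exists>r. strict_mono r \<and> (\<forall>i\<in>{1..k}. (\<lambda>n. lam (xs (r n)) i) \<longlonglongrightarrow> lam x0 i)"
proof -
  have K: "is_KKT_mult g k h (xs n) (ys n) (lam (xs n))" for n using lam xs(1) ys(1) by blast
  have nn: "lam (xs n) i \<ge> 0" if "i \<in> {1..k}" for n i using K[of n] that unfolding is_KKT_mult_def by blast
  have st: "Dy g (xs n) (ys n) v + (\<Sum>i\<in>{1..k}. lam (xs n) i * Dy (h i) (xs n) (ys n) v) = 0" for n v
    using K[of n] unfolding is_KKT_mult_def by blast
  have cs: "lam (xs n) i * h i (xs n) (ys n) = 0" if "i \<in> {1..k}" for n i
    using K[of n] that unfolding is_KKT_mult_def by blast
  define T where "T n = 1 + (\<Sum>i\<in>{1..k}. lam (xs n) i)" for n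
  have T1: "T n \<ge> 1" for n
  proof -
    have "0 \<le> (\<Sum>i\<in>{1..k}. lam (xs n) i)" by (rule sum_nonneg) (use nn in blast)
    then show ?thesis unfolding T_def by linarith
  qed
  then have Tpos: "T n > 0" for n using less_le_trans zero_less_one by blast
  define a where "a n i = (if i = 0 then 1 / T n else lam (xs n) i / T n)" for n i
  have a_b: "0 \<le> a n i \<and> a n i \<le> 1" if i: "i \<in> insert 0 {1..k}" for n i
  proof (cases "i = 0")
    case True
    have "1 / T n \<le> 1 / 1" using T1 by (intro divide_left_mono) (auto intro: mult_pos_pos Tpos)
    then show ?thesis using True Tpos[of n] unfolding a_def by simp
  next
    case False
    then have i': "i \<in> {1..k}" using i by auto
    have "lam (xs n) i \<le> (\<Sum>i\<in>{1..k}. lam (xs n) i)" using i' nn by (intro member_le_sum) auto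
    then have "lam (xs n) i \<le> T n" unfolding T_def by linarith
    then show ?thesis using False nn[OF i'] Tpos[of n] unfolding a_def by (simp add: divide_le_eq_1)
  qed
  have "\<forall>i\<in>insert 0 {1..k}. bounded (range (\<lambda>n. a n i))"
  proof
    fix i assume i: "i \<in> insert 0 {1..k}"
    have "norm (a n i) \<le> 1" for n using a_b[OF i, of n] by simp
    then show "bounded (range (\<lambda>n. a n i))" unfolding bounded_iff by blast
  qed
  then obtain r l where r: "strict_mono r" "\<forall>i\<in>insert 0 {1..k}. (\<lambda>n. a (r n) i) \<longlonglongrightarrow> l i"
    using subseq_family[of "insert 0 {1..k}" a] by blast
  define tb where "tb = l 0"
  have xr: "(\<lambda>n. xs (r n)) \<longlonglongrightarrow> x0" using LIMSEQ_subseq_LIMSEQ[OF xs(2) r(1)] by (simp add: o_def)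
  have yr: "(\<lambda>n. ys (r n)) \<longlonglongrightarrow> yb" using LIMSEQ_subseq_LIMSEQ[OF ys(2) r(1)] by (simp add: o_def)
  have ta: "(\<lambda>n. a (r n) 0) \<longlonglongrightarrow> tb" using r(2) unfolding tb_def by blast
  have la: "(\<lambda>n. a (r n) i) \<longlonglongrightarrow> l i" if "i \<in> {1..k}" for i using r(2) that by blast
  have lnn: "l i \<ge> 0" if i: "i \<in> {1..k}" for i
    using a_b i by (intro tendsto_lowerbound[OF la[OF i]] always_eventually) auto
  have tnn: "tb \<ge> 0" using a_b by (intro tendsto_lowerbound[OF ta] always_eventually) auto
  have aeq: "a n i = lam (xs n) i / T n" if "i \<in> {1..k}" for n i using that unfolding a_def by auto
  have sta: "a n 0 * Dy g (xs n) (ys n) v + (\<Sum>i\<in>{1..k}. a n i * Dy (h i) (xs n) (ys n) v) = 0" for n v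
  proof -
    have "(\<Sum>i\<in>{1..k}. a n i * Dy (h i) (xs n) (ys n) v) = (\<Sum>i\<in>{1..k}. lam (xs n) i * Dy (h i) (xs n) (ys n) v) / T n"
      unfolding sum_divide_distrib by (rule sum.cong) (simp_all add: aeq)
    moreover have "a n 0 * Dy g (xs n) (ys n) v = Dy g (xs n) (ys n) v / T n" unfolding a_def by simp
    ultimately have "a n 0 * Dy g (xs n) (ys n) v + (\<Sum>i\<in>{1..k}. a n i * Dy (h i) (xs n) (ys n) v)
       = (Dy g (xs n) (ys n) v + (\<Sum>i\<in>{1..k}. lam (xs n) i * Dy (h i) (xs n) (ys n) v)) / T n"
      by (simp add: add_divide_distrib)
    then show ?thesis using st by simp
  qed
  have stl: "tb * Dy g x0 yb v + (\<Sum>i\<in>{1..k}. l i * Dy (h i) x0 yb v) = 0" for v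
  proof -
    have "(\<lambda>n. a (r n) 0 * Dy g (xs (r n)) (ys (r n)) v + (\<Sum>i\<in>{1..k}. a (r n) i * Dy (h i) (xs (r n)) (ys (r n)) v))
      \<longlonglongrightarrow> tb * Dy g x0 yb v + (\<Sum>i\<in>{1..k}. l i * Dy (h i) x0 yb v)"
    proof (rule tendsto_add)
      show "(\<lambda>n. a (r n) 0 * Dy g (xs (r n)) (ys (r n)) v) \<longlonglongrightarrow> tb * Dy g x0 yb v"
        by (rule tendsto_mult[OF ta Dy_tendsto[OF gd gc xr yr tendsto_const]])
      show "(\<lambda>n. \<Sum>i\<in>{1..k}. a (r n) i * Dy (h i) (xs (r n)) (ys (r n)) v) \<longlonglongrightarrow> (\<Sum>i\<in>{1..k}. l i * Dy (h i) x0 yb v)"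
      proof (rule tendsto_sum)
        fix i assume i: "i \<in> {1..k}"
        show "(\<lambda>n. a (r n) i * Dy (h i) (xs (r n)) (ys (r n)) v) \<longlonglongrightarrow> l i * Dy (h i) x0 yb v"
          by (rule tendsto_mult[OF la[OF i] Dy_tendsto[OF hd[OF i] hc[OF i] xr yr tendsto_const]])
      qed
    qed
    then show ?thesis unfolding sta by (simp add: LIMSEQ_const_iff)
  qed
  have csl: "l i * h i x0 yb = 0" if i: "i \<in> {1..k}" for i
  proof -
    have "(\<lambda>n. a (r n) i * h i (xs (r n)) (ys (r n))) \<longlonglongrightarrow> l i * h i x0 yb"
      by (intro tendsto_mult la[OF i] F_tendsto[OF hd[OF i] xr yr])
    moreover have "a (r n) i * h i (xs (r n)) (ys (r n)) = 0" for n
      using cs[OF i, of "r n"] aeq[OF i, of "r n"] by simp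
    ultimately show ?thesis by (simp add: LIMSEQ_const_iff)
  qed
  have suml: "tb + (\<Sum>i\<in>{1..k}. l i) = 1"
  proof -
    have "a n 0 + (\<Sum>i\<in>{1..k}. a n i) = 1" for n
    proof -
      have "(\<Sum>i\<in>{1..k}. a n i) = (\<Sum>i\<in>{1..k}. lam (xs n) i) / T n"
        unfolding sum_divide_distrib by (rule sum.cong) (simp_all add: aeq)
      moreover have "a n 0 = 1 / T n" unfolding a_def by simp
      ultimately have "a n 0 + (\<Sum>i\<in>{1..k}. a n i) = (1 + (\<Sum>i\<in>{1..k}. lam (xs n) i)) / T n"
        by (simp add: add_divide_distrib)
      also have "1 + (\<Sum>i\<in>{1..k}. lam (xs n) i) = T n" by (simp add: T_def)
      finally show ?thesis using Tpos[of n] by simp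
    qed
    moreover have "(\<lambda>n. a (r n) 0 + (\<Sum>i\<in>{1..k}. a (r n) i)) \<longlonglongrightarrow> tb + (\<Sum>i\<in>{1..k}. l i)"
      by (intro tendsto_add ta tendsto_sum la)
    ultimately show ?thesis by (simp add: LIMSEQ_const_iff)
  qed
  have fyb: "h i x0 yb \<le> 0" if "i \<in> {1..k}" for i using yb that by (auto simp: ystar_def feas_def)
  define A where "A = {i\<in>{1..k}. h i x0 yb = 0}"
  have lz: "l i = 0" if "i \<in> {1..k}" "i \<notin> A" for i
    using csl[OF that(1)] that unfolding A_def by auto
  have tb0: "tb > 0"
  proof (rule ccontr)
    assume "\<not> tb > 0"
    with tnn have t0: "tb = 0" by simp
    have S: "(\<Sum>i\<in>A. l i * Dy (h i) x0 yb v) = 0" for v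
    proof -
      have "(\<Sum>i\<in>A. l i * Dy (h i) x0 yb v) = (\<Sum>i\<in>{1..k}. l i * Dy (h i) x0 yb v)"
        by (rule sum.mono_neutral_left) (use lz in \<open>auto simp: A_def\<close>)
      also have "\<dots> = 0" using stl[of v] t0 by simp
      finally show ?thesis .
    qed
    have "LICQ_at k h x0 yb" using lq xs(3) yb by blast
    then have L: "\<forall>c. (\<forall>v. (\<Sum>i\<in>A. c i * Dy (h i) x0 yb v) = 0) \<longrightarrow> (\<forall>i\<in>A. c i = 0)"
      unfolding LICQ_at_def A_def .
    have "(\<forall>v. (\<Sum>i\<in>A. l i * Dy (h i) x0 yb v) = 0) \<longrightarrow> (\<forall>i\<in>A. l i = 0)" by (rule spec[OF L])
    then have "\<forall>i\<in>A. l i = 0" using S by blast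
    then have "\<forall>i\<in>{1..k}. l i = 0" using lz by blast
    then have "(\<Sum>i\<in>{1..k}. l i) = 0" by simp
    with suml t0 show False by simp
  qed
  define lb where "lb i = l i / tb" for i
  have "is_KKT_mult g k h x0 yb lb" unfolding is_KKT_mult_def
  proof (intro conjI ballI allI)
    fix i assume i: "i \<in> {1..k}"
    show "0 \<le> lb i" unfolding lb_def using lnn[OF i] tb0 by simp
    show "lb i * h i x0 yb = 0" unfolding lb_def using csl[OF i] by simp
  next
    fix v
    have "(\<Sum>i\<in>{1..k}. lb i * Dy (h i) x0 yb v) = (\<Sum>i\<in>{1..k}. l i * Dy (h i) x0 yb v) / tb"
      unfolding lb_def sum_divide_distrib by (rule sum.cong) simp_all
    moreover have "Dy g x0 yb v = tb * Dy g x0 yb v / tb" using tb0 by simp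
    ultimately have "Dy g x0 yb v + (\<Sum>i\<in>{1..k}. lb i * Dy (h i) x0 yb v)
        = (tb * Dy g x0 yb v + (\<Sum>i\<in>{1..k}. l i * Dy (h i) x0 yb v)) / tb"
      by (simp add: add_divide_distrib)
    then show "Dy g x0 yb v + (\<Sum>i\<in>{1..k}. lb i * Dy (h i) x0 yb v) = 0" using stl[of v] by simp
  qed
  then have eq: "lam x0 i = lb i" if "i \<in> {1..k}" for i
    using KKT_unique[OF xs(3) yb _ _ that] lam xs(3) yb by blast
  have "(\<lambda>n. lam (xs (r n)) i) \<longlonglongrightarrow> lam x0 i" if i: "i \<in> {1..k}" for i
  proof -
    have "(\<lambda>n. a (r n) i / a (r n) 0) \<longlonglongrightarrow> l i / tb"
      using tb0 by (intro tendsto_divide la[OF i] ta) simp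
    moreover have "a (r n) i / a (r n) 0 = lam (xs (r n)) i" for n
      using aeq[OF i, of "r n"] Tpos[of "r n"] unfolding a_def by simp
    ultimately show ?thesis using eq[OF i] unfolding lb_def by simp
  qed
  with r(1) show ?thesis by blast
qed


lemma lam_cont:
  assumes lam: "\<forall>x\<in>X. \<forall>y\<in>ystar g k h x. is_KKT_mult g k h x y (lam x)" and i: "i \<in> {1..k}"
  shows "continuous_on X (\<lambda>x. lam x i)"
proof (rule continuous_on_sequentiallyI)
  fix u a assume u: "\<forall>n. u n \<in> X" and a: "a \<in> X" and ua: "u \<longlonglongrightarrow> a"
  show "(\<lambda>n. lam (u n) i) \<longlonglongrightarrow> lam a i"
  proof (rule subseq_conv)
    fix r :: "nat \<Rightarrow> nat" assume r: "strict_mono r"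
    define xs where "xs = u \<circ> r"
    have xs: "\<forall>n. xs n \<in> X" "xs \<longlonglongrightarrow> a" unfolding xs_def using u LIMSEQ_subseq_LIMSEQ[OF ua r] by auto
    have "\<forall>n. \<exists>y. y \<in> ystar g k h (xs n)" using ystar_ne xs(1) by blast
    then obtain ys where ys: "\<forall>n. ys n \<in> ystar g k h (xs n)" by metis
    obtain r1 yb where r1: "strict_mono r1" "(\<lambda>n. ys (r1 n)) \<longlonglongrightarrow> yb"
      using seqY[OF xs a ys] by blast
    have xs1: "\<forall>n. (xs \<circ> r1) n \<in> X" "(xs \<circ> r1) \<longlonglongrightarrow> a"
      using xs LIMSEQ_subseq_LIMSEQ[OF xs(2) r1(1)] by auto
    have ys1: "\<forall>n. (ys \<circ> r1) n \<in> ystar g k h ((xs \<circ> r1) n)" "(ys \<circ> r1) \<longlonglongrightarrow> yb"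
      using ys r1(2) by (auto simp: o_def)
    have yb: "yb \<in> ystar g k h a" by (rule closed_ystar[OF xs1 a ys1])
    obtain r2 where r2: "strict_mono r2" "\<forall>i\<in>{1..k}. (\<lambda>n. lam ((xs \<circ> r1) (r2 n)) i) \<longlonglongrightarrow> lam a i"
      using lam_lim[OF lam xs1 a ys1 yb] by blast
    have "strict_mono (r1 \<circ> r2)" using r1(1) r2(1) by (rule strict_mono_o)
    moreover have "(\<lambda>n. lam (u (r ((r1 \<circ> r2) n))) i) \<longlonglongrightarrow> lam a i"
      using r2(2) i by (simp add: xs_def o_def)
    ultimately show "\<exists>r'::nat\<Rightarrow>nat. strict_mono r' \<and> (\<lambda>n. lam (u (r (r' n))) i) \<longlonglongrightarrow> lam a i" by blast
  qed
qed

end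

theorem lemma8:
  fixes f g :: "'a::euclidean_space \<Rightarrow> 'b::euclidean_space \<Rightarrow> real"
    and h :: "nat \<Rightarrow> 'a \<Rightarrow> 'b \<Rightarrow> real"
    and k :: nat and X :: "'a set"
  assumes A1: "C1_fun (\<lambda>(x, y). f x y)" "C2_fun (\<lambda>(x, y). g x y)"
              "\<forall>i\<in>{1..k}. C2_fun (\<lambda>(x, y). h i x y)"
    and A2: "convex X" "compact X" "\<forall>x\<in>X. \<exists>y. \<forall>i\<in>{1..k}. h i x y < 0"
    and A3: "\<forall>x\<in>X. \<forall>y\<in>ystar g k h x. LICQ_at k h x y"
    and SC_or_LIN:
      "(\<exists>\<mu>>0. \<forall>x\<in>X. strongly_convex_on UNIV \<mu> (g x) \<and> (\<forall>i\<in>{1..k}. convex_on UNIV (h i x)))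
       \<or> (\<forall>x\<in>X. affine_fun (g x) \<and> (\<forall>i\<in>{1..k}. affine_fun (h i x)) \<and> compact (feas k h x))"
  shows "\<exists>lam :: 'a \<Rightarrow> nat \<Rightarrow> real.
           (\<forall>x\<in>X. \<forall>y\<in>ystar g k h x. is_KKT_mult g k h x y (lam x)) \<and>
           (\<forall>i\<in>{1..k}. continuous_on X (\<lambda>x. lam x i)) \<and>
           (\<exists>C. \<forall>i\<in>{1..k}. \<forall>x\<in>X. \<bar>lam x i\<bar> \<le> C)"
proof -
  obtain G' where G': "\<forall>z. ((\<lambda>(x, y). g x y) has_derivative blinfun_apply (G' z)) (at z)"
    "continuous_on UNIV G'" using C2_D[OF A1(2)] by blast
  have "\<forall>i\<in>{1..k}. \<exists>F'. (\<forall>z. ((\<lambda>(x, y). h i x y) has_derivative blinfun_apply (F' z)) (at z))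
      \<and> continuous_on UNIV F'" using C2_D A1(3) by blast
  then obtain H' where H': "\<forall>i\<in>{1..k}. (\<forall>z. ((\<lambda>(x, y). h i x y) has_derivative blinfun_apply (H' i z)) (at z))
      \<and> continuous_on UNIV (H' i)" by metis
  interpret bl g h k X G' H'
  proof
    show "\<forall>z. ((\<lambda>(x, y). g x y) has_derivative blinfun_apply (G' z)) (at z)" by (rule G'(1))
    show "continuous_on UNIV G'" by (rule G'(2))
    fix i assume i: "i \<in> {1..k}"
    show "\<forall>z. ((\<lambda>(x, y). h i x y) has_derivative blinfun_apply (H' i z)) (at z)" using H' i by blast
    show "continuous_on UNIV (H' i)" using H' i by blast
  qed (use A2 A3 SC_or_LIN in auto)
  obtain lam where lam: "\<forall>x\<in>X. \<forall>y\<in>ystar g k h x. is_KKT_mult g k h x y (lam x)"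
    using lam_exists by blast
  have cont: "\<forall>i\<in>{1..k}. continuous_on X (\<lambda>x. lam x i)" using lam_cont[OF lam] by blast
  define F where "F x = (\<Sum>i\<in>{1..k}. \<bar>lam x i\<bar>)" for x
  have "continuous_on X F" unfolding F_def using cont by (intro continuous_intros) auto
  then have "compact (F ` X)" using A2(2) by (rule compact_continuous_image)
  then obtain C where C: "\<forall>z\<in>F ` X. norm z \<le> C" using compact_imp_bounded bounded_iff by metis
  have "\<forall>i\<in>{1..k}. \<forall>x\<in>X. \<bar>lam x i\<bar> \<le> C"
  proof (intro ballI)
    fix i x assume i: "i \<in> {1..k}" and x: "x \<in> X"
    have "\<bar>lam x i\<bar> \<le> F x" unfolding F_def using i by (intro member_le_sum) auto
    also have "\<dots> \<le> C" using C x by force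
    finally show "\<bar>lam x i\<bar> \<le> C" .
  qed
  with lam cont show ?thesis by blast
qed

end
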